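(* Let $\Phi:\mathbb{R}\to\mathbb{R}$, $\Phi(x)=W^{(2)}\mathrm{ReLU}\big(W^{(1)}\mathrm{ReLU}(W^{(0)}x+b^{(0)})+b^{(1)}\big)+b^{(2)}$, where $W^{(0)},W^{(1)}\sim\mathcal{N}(0,2)$, $W^{(2)}\sim\mathcal{N}(0,1)$, $b^{(\ell)}\sim\mathcal{D}^{(\ell)}$ for arbitrary probability distributions $\mathcal{D}^{(\ell)}$ on $\mathbb{R}$ ($\ell=0,1,2$), all jointly independent real random variables. Assume $\mathbb{P}(b^{(1)}\le 0)>0$. Let $\widetilde{\Phi}(x)=W^{(2)}(W^{(1)}(W^{(0)}x+b^{(0)})+b^{(1)})+b^{(2)}$. Then with positive probability $\mathrm{Lip}(\Phi)=0<\mathrm{Lip}(\widetilde{\Phi})$.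
   Context: $\mathrm{ReLU}(t)=\max\{0,t\}$; $\mathrm{Lip}(f)=\sup_{x\neq y}|f(x)-f(y)|/|x-y|$. This is a ReLU network of width $N=1$ with $L=2$ hidden layers, with the variance $2/N=2$ for the first two weight layers. *)

theory Defs
  imports "HOL-Probability.Probability"
begin

definition lip :: "(real \<Rightarrow> real) \<Rightarrow> ereal" where
  "lip f = (SUP p \<in> {p :: real \<times> real. fst p \<noteq> snd p}.
              ereal (\<bar>f (fst p) - f (snd p)\<bar> / \<bar>fst p - snd p\<bar>))"

definition relu :: "real \<Rightarrow> real" where
  "relu t = max 0 t"

end

theory Submission imports Defs begin

lemma lip_affine: "lip (\<lambda>x. c * x + d) = ereal \<bar>c\<bar>"
proof -
  have h: "\<And>p. fst p \<noteq> snd p \<Longrightarrow> \<bar>(c * fst p + d) - (c * snd p + d)\<bar> / \<bar>fst p - snd p\<bar> = \<bar>c\<bar>"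
  proof -
    fix p :: "real \<times> real" assume "fst p \<noteq> snd p"
    then have "\<bar>fst p - snd p\<bar> \<noteq> 0" by simp
    moreover have "(c * fst p + d) - (c * snd p + d) = c * (fst p - snd p)" by (simp add: algebra_simps)
    ultimately show "\<bar>(c * fst p + d) - (c * snd p + d)\<bar> / \<bar>fst p - snd p\<bar> = \<bar>c\<bar>"
      by (simp add: abs_mult)
  qed
  have ne: "{p :: real \<times> real. fst p \<noteq> snd p} \<noteq> {}" proof -
    have "((0::real),(1::real)) \<in> {p :: real \<times> real. fst p \<noteq> snd p}" by simp
    then show ?thesis by blast
  qed
  show ?thesis
  proof -
    have "(SUP p \<in> {p :: real \<times> real. fst p \<noteq> snd p}. ereal (\<bar>(c * fst p + d) - (c * snd p + d)\<bar> / \<bar>fst p - snd p\<bar>))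
        = (SUP p \<in> {p :: real \<times> real. fst p \<noteq> snd p}. ereal \<bar>c\<bar>)"
    proof (rule SUP_cong[OF refl])
      fix p :: "real \<times> real" assume "p \<in> {p :: real \<times> real. fst p \<noteq> snd p}"
      then have "fst p \<noteq> snd p" by simp
      then show "ereal (\<bar>(c * fst p + d) - (c * snd p + d)\<bar> / \<bar>fst p - snd p\<bar>) = ereal \<bar>c\<bar>"
        using h[of p] by simp
    qed
    also have "\<dots> = ereal \<bar>c\<bar>" using ne by (rule SUP_const)
    finally show ?thesis unfolding lip_def by simp
  qed
qed

lemma normal_pos:
  fixes M :: "'a measure" and X :: "'a \<Rightarrow> real"
  assumes P: "prob_space M" and D: "distributed M lborel X (\<lambda>x. ennreal (normal_density 0 s x))"
    and s: "s > 0" and S: "S \<in> sets borel" and SP: "emeasure lborel S > 0"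
  shows "measure M (X -` S \<inter> space M) > 0"
proof -
  interpret prob_space M by (rule P)
  have Xm: "X \<in> measurable M lborel" using D by (simp add: distributed_def)
  have fm: "(\<lambda>x. ennreal (normal_density 0 s x)) \<in> borel_measurable lborel" using D by (simp add: distributed_def)
  have e: "emeasure M (X -` S \<inter> space M) = emeasure (density lborel (\<lambda>x. ennreal (normal_density 0 s x))) S"
  proof -
    have "emeasure M (X -` S \<inter> space M) = emeasure (distr M lborel X) S"
      using Xm S by (simp add: emeasure_distr)
    then show ?thesis using D by (simp add: distributed_def)
  qed
  have "emeasure M (X -` S \<inter> space M) \<noteq> 0"
  proof
    assume "emeasure M (X -` S \<inter> space M) = 0"
    then have "S \<in> null_sets (density lborel (\<lambda>x. ennreal (normal_density 0 s x)))"
      using e S by (simp add: null_sets_def)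
    then have "AE x in lborel. x \<in> S \<longrightarrow> ennreal (normal_density 0 s x) = 0"
      using null_sets_density_iff[OF fm] by blast
    moreover have "ennreal (normal_density 0 s x) \<noteq> 0" for x
      using normal_density_pos[OF s, of 0 x] by simp
    ultimately have "AE x in lborel. x \<notin> S"
      by (auto elim: eventually_mono)
    then have "S \<in> null_sets lborel" using AE_iff_null_sets S by (simp add: AE_iff_null_sets)
    then show False using SP null_setsD1[of S lborel] by simp
  qed
  then show ?thesis using emeasure_eq_measure
    by (metis ennreal_0 measure_nonneg order_less_le)
qed

lemma lborel_Ioi_pos: "emeasure lborel {(0::real)<..} > 0"
proof -
  have "emeasure lborel {(0::real)<..1} \<le> emeasure lborel {(0::real)<..}"
    by (rule emeasure_mono) auto
  moreover have "emeasure lborel {(0::real)<..1} = 1" by simp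
  ultimately show ?thesis by (metis ennreal_zero_less_one order_less_le_trans)
qed

lemma lborel_Iio_pos: "emeasure lborel {..<(0::real)} > 0"
proof -
  have "emeasure lborel {(-1::real)<..<0} \<le> emeasure lborel {..<(0::real)}"
    by (rule emeasure_mono) auto
  moreover have "emeasure lborel {(-1::real)<..<0} = 1" by simp
  ultimately show ?thesis by (metis ennreal_zero_less_one order_less_le_trans)
qed

theorem proposition4p9:
  fixes M :: "'a measure" and W0 W1 W2 b0 b1 b2 :: "'a \<Rightarrow> real"
  assumes "prob_space M"
    and "prob_space.indep_vars M (\<lambda>_. borel) (\<lambda>i. [W0, W1, W2, b0, b1, b2] ! i) {..<6}"
    and "distributed M lborel W0 (normal_density 0 (sqrt 2))"
    and "distributed M lborel W1 (normal_density 0 (sqrt 2))"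
    and "distributed M lborel W2 (normal_density 0 1)"
    and "measure M {\<omega> \<in> space M. b1 \<omega> \<le> 0} > 0"
  shows "\<exists>A \<in> sets M. measure M A > 0 \<and>
           (\<forall>\<omega> \<in> A.
              lip (\<lambda>x. W2 \<omega> * relu (W1 \<omega> * relu (W0 \<omega> * x + b0 \<omega>) + b1 \<omega>) + b2 \<omega>) = 0 \<and>
              0 < lip (\<lambda>x. W2 \<omega> * (W1 \<omega> * (W0 \<omega> * x + b0 \<omega>) + b1 \<omega>) + b2 \<omega>))"
proof -
  interpret prob_space M by (rule assms(1))
  define X where "X = (\<lambda>i. [W0, W1, W2, b0, b1, b2] ! i)"
  define S :: "nat \<Rightarrow> real set" where
    "S = (\<lambda>j. if j = 0 \<or> j = 2 then {0<..} else if j = 1 then {..<0} else {..0})"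
  define A where "A = (\<lambda>j. X j -` S j \<inter> space M)"
  define J :: "nat set" where "J = {0,1,2,4}"
  have ind: "indep_sets (\<lambda>i. {X i -` B \<inter> space M | B. B \<in> sets borel}) {..<6}"
    using assms(2) unfolding X_def indep_vars_def2 by simp
  have AF: "\<forall>j\<in>J. A j \<in> {X j -` B \<inter> space M | B. B \<in> sets borel}"
  proof -
    have Sb: "S j \<in> sets borel" for j unfolding S_def by auto
    show ?thesis unfolding A_def using Sb by blast
  qed
  have pJ: "prob (\<Inter>j\<in>J. A j) = (\<Prod>j\<in>J. prob (A j))"
    by (rule indep_setsD[OF ind _ _ _ AF]) (auto simp: J_def)
  have a0: "A 0 = W0 -` {0<..} \<inter> space M" by (simp add: A_def S_def X_def)
  have a1: "A 1 = W1 -` {..<0} \<inter> space M" by (simp add: A_def S_def X_def)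
  have a2: "A 2 = W2 -` {0<..} \<inter> space M" by (simp add: A_def S_def X_def)
  have a4: "A 4 = {\<omega> \<in> space M. b1 \<omega> \<le> 0}" by (auto simp add: A_def S_def X_def)
  have JI: "(\<Inter>j\<in>J. A j) = A 0 \<inter> A 1 \<inter> A 2 \<inter> A 4" by (auto simp add: J_def)
  have p0: "prob (A 0) > 0"
  proof -
    have "prob (W0 -` {0<..} \<inter> space M) > 0"
      using normal_pos[OF assms(1) assms(3) _ _ lborel_Ioi_pos] by simp
    moreover have a0: "A 0 = W0 -` {0<..} \<inter> space M" by (simp add: A_def S_def X_def)
    ultimately show ?thesis by simp
  qed
  have p1: "prob (A 1) > 0"
  proof -
    have "prob (W1 -` {..<0} \<inter> space M) > 0"
      using normal_pos[OF assms(1) assms(4) _ _ lborel_Iio_pos] by simp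
    moreover have a1: "A 1 = W1 -` {..<0} \<inter> space M" by (simp add: A_def S_def X_def)
    ultimately show ?thesis by simp
  qed
  have p2: "prob (A 2) > 0"
  proof -
    have "prob (W2 -` {0<..} \<inter> space M) > 0"
      using normal_pos[OF assms(1) assms(5) _ _ lborel_Ioi_pos] by simp
    moreover have a2: "A 2 = W2 -` {0<..} \<inter> space M" by (simp add: A_def S_def X_def)
    ultimately show ?thesis by simp
  qed
  have p4: "prob (A 4) > 0"
  proof -
    have "A 4 = {\<omega> \<in> space M. b1 \<omega> \<le> 0}" by (auto simp add: A_def S_def X_def)
    then show ?thesis using assms(6) by simp
  qed
  have E: "(\<Inter>j\<in>J. A j) = {\<omega>\<in>space M. W0 \<omega> > 0 \<and> W1 \<omega> < 0 \<and> W2 \<omega> > 0 \<and> b1 \<omega> \<le> 0}"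
    unfolding JI a0 a1 a2 a4 by auto
  have Esets: "(\<Inter>j\<in>J. A j) \<in> sets M"
  proof -
    have sub: "\<forall>i\<in>{..<6}. {X i -` B \<inter> space M | B. B \<in> sets borel} \<subseteq> events"
      using ind unfolding indep_sets_def by (rule conjunct1)
    have "A j \<in> events" if "j \<in> J" for j
    proof -
      have "j \<in> {..<6}" using that unfolding J_def by auto
      then have "{X j -` B \<inter> space M | B. B \<in> sets borel} \<subseteq> events" by (rule bspec[OF sub])
      moreover have "A j \<in> {X j -` B \<inter> space M | B. B \<in> sets borel}" by (rule bspec[OF AF that])
      ultimately show ?thesis by (rule subsetD)
    qed
    then show ?thesis unfolding JI J_def by auto
  qed
  have Epos: "prob (\<Inter>j\<in>J. A j) > 0"
    unfolding pJ using p0 p1 p2 p4 by (simp add: J_def)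
  show ?thesis
  proof (intro bexI[OF _ Esets] conjI ballI)
    show "prob (\<Inter>j\<in>J. A j) > 0" by (rule Epos)
  next
    fix \<omega> assume "\<omega> \<in> (\<Inter>j\<in>J. A j)"
    then have w: "W0 \<omega> > 0" "W1 \<omega> < 0" "W2 \<omega> > 0" "b1 \<omega> \<le> 0" unfolding E by auto
    have "(\<lambda>x. W2 \<omega> * relu (W1 \<omega> * relu (W0 \<omega> * x + b0 \<omega>) + b1 \<omega>) + b2 \<omega>) = (\<lambda>x. 0 * x + b2 \<omega>)"
    proof
      fix x
      have "relu (W0 \<omega> * x + b0 \<omega>) \<ge> 0" by (simp add: relu_def)
      then have "W1 \<omega> * relu (W0 \<omega> * x + b0 \<omega>) \<le> 0" using w(2) by (simp add: mult_nonpos_nonneg)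
      then have "relu (W1 \<omega> * relu (W0 \<omega> * x + b0 \<omega>) + b1 \<omega>) = 0" using w(4) by (simp add: relu_def)
      then show "W2 \<omega> * relu (W1 \<omega> * relu (W0 \<omega> * x + b0 \<omega>) + b1 \<omega>) + b2 \<omega> = 0 * x + b2 \<omega>" by simp
    qed
    then show "lip (\<lambda>x. W2 \<omega> * relu (W1 \<omega> * relu (W0 \<omega> * x + b0 \<omega>) + b1 \<omega>) + b2 \<omega>) = 0"
      using lip_affine[of 0 "b2 \<omega>"] by (simp add: zero_ereal_def)
    have "(\<lambda>x. W2 \<omega> * (W1 \<omega> * (W0 \<omega> * x + b0 \<omega>) + b1 \<omega>) + b2 \<omega>)
        = (\<lambda>x. (W2 \<omega> * W1 \<omega> * W0 \<omega>) * x + (W2 \<omega> * (W1 \<omega> * b0 \<omega> + b1 \<omega>) + b2 \<omega>))"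
      by (simp add: algebra_simps)
    moreover have "W2 \<omega> * W1 \<omega> * W0 \<omega> \<noteq> 0" using w by simp
    ultimately show "0 < lip (\<lambda>x. W2 \<omega> * (W1 \<omega> * (W0 \<omega> * x + b0 \<omega>) + b1 \<omega>) + b2 \<omega>)"
      by (simp only: lip_affine) simp
  qed
qed

end
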